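(* Let $Q$ be a $3\times 3$ array containing each of the symbols $0,1,\dots,8$ exactly once, such that each row and each column of $Q$ has sum $12$. Then either the entry sets of the three rows of $Q$ are $\{0,4,8\}$, $\{1,5,6\}$, $\{2,3,7\}$ (in some order) and the entry sets of the three columns are $\{0,5,7\}$, $\{2,4,6\}$, $\{1,3,8\}$ (in some order), or the same holds with the roles of rows and columns interchanged. *)

theory Defs
  imports Main
begin

text \<open>A 3x3 array is modelled as Q :: nat => nat => nat, with entry Q i j at row i, column j,
for i, j in {0..<3}. Entries outside this range are irrelevant.\<close>

definition row_set :: "(nat \<Rightarrow> nat \<Rightarrow> nat) \<Rightarrow> nat \<Rightarrow> nat set" where
  "row_set Q i = (\<lambda>j. Q i j) ` {0..<3}"

definition col_set :: "(nat \<Rightarrow> nat \<Rightarrow> nat) \<Rightarrow> nat \<Rightarrow> nat set" where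
  "col_set Q j = (\<lambda>i. Q i j) ` {0..<3}"

end

theory Submission
  imports Defs
begin

lemma le8: "(x::nat) \<le> 8 \<Longrightarrow> x = 0 \<or> x = 1 \<or> x = 2 \<or> x = 3 \<or> x = 4 \<or> x = 5 \<or> x = 6 \<or> x = 7 \<or> x = 8"
  by (simp add: le_Suc_eq numeral_eq_Suc)

lemma le8E: assumes "(x::nat) \<le> 8" "(x=0 \<Longrightarrow> P)" "(x=1 \<Longrightarrow> P)" "(x=2 \<Longrightarrow> P)" "(x=3 \<Longrightarrow> P)"
  "(x=4 \<Longrightarrow> P)" "(x=5 \<Longrightarrow> P)" "(x=6 \<Longrightarrow> P)" "(x=7 \<Longrightarrow> P)" "(x=8 \<Longrightarrow> P)" shows P
  using le8[OF assms(1)] assms(2-10) by blast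
definition "TRI M (R::nat set) \<longleftrightarrow>
   (M = (273::nat) \<and> R = {0,4,8}) \<or> (M = 161 \<and> R = {0,5,7}) \<or> (M = 266 \<and> R = {1,3,8}) \<or> (M = 146 \<and> R = {1,4,7})
 \<or> (M = 98 \<and> R = {1,5,6}) \<or> (M = 140 \<and> R = {2,3,7}) \<or> (M = 84 \<and> R = {2,4,6}) \<or> (M = 56 \<and> R = {3,4,5})"

lemma triple:
  fixes x y z :: nat
  assumes "x \<le> 8" "y \<le> 8" "z \<le> 8" "x \<noteq> y" "x \<noteq> z" "y \<noteq> z" "x+y+z=12"
  shows "TRI (2^x+2^y+2^z) {x,y,z}"
  apply (insert assms(3-7))
  by (rule le8E[OF assms(1)]; rule le8E[OF assms(2)]; simp add: TRI_def insert_commute)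

lemma part:
  assumes "M0+M1+M2 = (511::nat)" "TRI M0 R0" "TRI M1 R1" "TRI M2 R2"
  shows "{R0,R1,R2} = {{0,4,8}, {1,5,6}, {2,3,7}} \<or> {R0,R1,R2} = {{0,5,7}, {2,4,6}, {1,3,8}}"
  using assms unfolding TRI_def
  apply (elim disjE conjE)
  apply (simp_all add: insert_commute)
  done

lemma neq_set: "x \<in> A \<Longrightarrow> x \<notin> B \<Longrightarrow> A \<noteq> B" by auto

lemma s3: "(\<Sum>j<(3::nat). f j) = f 0 + f 1 + (f 2 :: nat)"
proof -
  have "{..<3::nat} = {0,1,2}" by auto
  then show ?thesis by simp
qed

lemma three: "{0..<3::nat} = {0,1,2}" by auto

theorem lemma3p1:
  fixes Q :: "nat \<Rightarrow> nat \<Rightarrow> nat"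
  assumes bij: "bij_betw (\<lambda>(i, j). Q i j) ({0..<3} \<times> {0..<3}) {0..8}"
    and rows: "\<And>i. i < 3 \<Longrightarrow> (\<Sum>j<3. Q i j) = 12"
    and cols: "\<And>j. j < 3 \<Longrightarrow> (\<Sum>i<3. Q i j) = 12"
  shows "(row_set Q ` {0..<3} = {{0,4,8}, {1,5,6}, {2,3,7}} \<and>
          col_set Q ` {0..<3} = {{0,5,7}, {2,4,6}, {1,3,8}})
       \<or> (col_set Q ` {0..<3} = {{0,4,8}, {1,5,6}, {2,3,7}} \<and>
          row_set Q ` {0..<3} = {{0,5,7}, {2,4,6}, {1,3,8}})"
proof -
  have le: "Q i j \<le> 8" if "i < 3" "j < 3" for i j
    using bij_betw_apply[OF bij, of "(i,j)"] that by auto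
  have inj: "Q i j \<noteq> Q i' j'" if "i < 3" "j < 3" "i' < 3" "j' < 3" "(i,j) \<noteq> (i',j')" for i j i' j'
    using inj_onD[OF bij_betw_imp_inj_on[OF bij], of "(i,j)" "(i',j')"] that by auto
  have D: "Q 0 0 \<noteq> Q 0 1"
    "Q 0 0 \<noteq> Q 0 2"
    "Q 0 0 \<noteq> Q 1 0"
    "Q 0 0 \<noteq> Q 1 1"
    "Q 0 0 \<noteq> Q 1 2"
    "Q 0 0 \<noteq> Q 2 0"
    "Q 0 0 \<noteq> Q 2 1"
    "Q 0 0 \<noteq> Q 2 2"
    "Q 0 1 \<noteq> Q 0 2"
    "Q 0 1 \<noteq> Q 1 0"
    "Q 0 1 \<noteq> Q 1 1"
    "Q 0 1 \<noteq> Q 1 2"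
    "Q 0 1 \<noteq> Q 2 0"
    "Q 0 1 \<noteq> Q 2 1"
    "Q 0 1 \<noteq> Q 2 2"
    "Q 0 2 \<noteq> Q 1 0"
    "Q 0 2 \<noteq> Q 1 1"
    "Q 0 2 \<noteq> Q 1 2"
    "Q 0 2 \<noteq> Q 2 0"
    "Q 0 2 \<noteq> Q 2 1"
    "Q 0 2 \<noteq> Q 2 2"
    "Q 1 0 \<noteq> Q 1 1"
    "Q 1 0 \<noteq> Q 1 2"
    "Q 1 0 \<noteq> Q 2 0"
    "Q 1 0 \<noteq> Q 2 1"
    "Q 1 0 \<noteq> Q 2 2"
    "Q 1 1 \<noteq> Q 1 2"
    "Q 1 1 \<noteq> Q 2 0"
    "Q 1 1 \<noteq> Q 2 1"
    "Q 1 1 \<noteq> Q 2 2"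
    "Q 1 2 \<noteq> Q 2 0"
    "Q 1 2 \<noteq> Q 2 1"
    "Q 1 2 \<noteq> Q 2 2"
    "Q 2 0 \<noteq> Q 2 1"
    "Q 2 0 \<noteq> Q 2 2"
    "Q 2 1 \<noteq> Q 2 2"
    by (rule inj; simp)+
  have B: "Q 0 0 \<le> 8"
    "Q 0 1 \<le> 8"
    "Q 0 2 \<le> 8"
    "Q 1 0 \<le> 8"
    "Q 1 1 \<le> 8"
    "Q 1 2 \<le> 8"
    "Q 2 0 \<le> 8"
    "Q 2 1 \<le> 8"
    "Q 2 2 \<le> 8"
    by (rule le; simp)+
  have S: "Q 0 0 + Q 0 1 + Q 0 2 = 12"
    "Q 1 0 + Q 1 1 + Q 1 2 = 12"
    "Q 2 0 + Q 2 1 + Q 2 2 = 12"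
    "Q 0 0 + Q 1 0 + Q 2 0 = 12"
    "Q 0 1 + Q 1 1 + Q 2 1 = 12"
    "Q 0 2 + Q 1 2 + Q 2 2 = 12"
    using rows[of 0] rows[of 1] rows[of 2] cols[of 0] cols[of 1] cols[of 2]
    by (simp_all add: s3)
  have T: "TRI ((2::nat)^(Q 0 0)+(2::nat)^(Q 0 1)+(2::nat)^(Q 0 2)) {Q 0 0, Q 0 1, Q 0 2}"
    "TRI ((2::nat)^(Q 1 0)+(2::nat)^(Q 1 1)+(2::nat)^(Q 1 2)) {Q 1 0, Q 1 1, Q 1 2}"
    "TRI ((2::nat)^(Q 2 0)+(2::nat)^(Q 2 1)+(2::nat)^(Q 2 2)) {Q 2 0, Q 2 1, Q 2 2}"
    "TRI ((2::nat)^(Q 0 0)+(2::nat)^(Q 1 0)+(2::nat)^(Q 2 0)) {Q 0 0, Q 1 0, Q 2 0}"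
    "TRI ((2::nat)^(Q 0 1)+(2::nat)^(Q 1 1)+(2::nat)^(Q 2 1)) {Q 0 1, Q 1 1, Q 2 1}"
    "TRI ((2::nat)^(Q 0 2)+(2::nat)^(Q 1 2)+(2::nat)^(Q 2 2)) {Q 0 2, Q 1 2, Q 2 2}"
    by (rule triple; simp only: B D S not_False_eq_True)+
  have tot: "(\<Sum>p\<in>{0..<3}\<times>{0..<3}. (2::nat) ^ ((\<lambda>(i, j). Q i j) p)) = (\<Sum>v\<in>{0..8}. 2 ^ v)"
    by (rule sum.reindex_bij_betw[OF bij])
  have tot2: "(\<Sum>v\<in>{0..8::nat}. (2::nat) ^ v) = 511"
    by (simp add: numeral_eq_Suc atLeast0AtMost)
  have tot3: "(\<Sum>p\<in>{0..<3}\<times>{0..<3}. (2::nat) ^ ((\<lambda>(i, j). Q i j) p)) = (2::nat)^(Q 0 0)+(2::nat)^(Q 0 1)+(2::nat)^(Q 0 2)+(2::nat)^(Q 1 0)+(2::nat)^(Q 1 1)+(2::nat)^(Q 1 2)+(2::nat)^(Q 2 0)+(2::nat)^(Q 2 1)+(2::nat)^(Q 2 2)"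
    by (simp add: sum.cartesian_product[symmetric] three)
  have MS: "((2::nat)^(Q 0 0)+(2::nat)^(Q 0 1)+(2::nat)^(Q 0 2)) + ((2::nat)^(Q 1 0)+(2::nat)^(Q 1 1)+(2::nat)^(Q 1 2)) + ((2::nat)^(Q 2 0)+(2::nat)^(Q 2 1)+(2::nat)^(Q 2 2)) = 511"
           "((2::nat)^(Q 0 0)+(2::nat)^(Q 1 0)+(2::nat)^(Q 2 0)) + ((2::nat)^(Q 0 1)+(2::nat)^(Q 1 1)+(2::nat)^(Q 2 1)) + ((2::nat)^(Q 0 2)+(2::nat)^(Q 1 2)+(2::nat)^(Q 2 2)) = 511"
    using tot tot2 tot3 by (simp_all add: algebra_simps)
  have RP: "{{Q 0 0, Q 0 1, Q 0 2}, {Q 1 0, Q 1 1, Q 1 2}, {Q 2 0, Q 2 1, Q 2 2}} = {{0,4,8}, {1,5,6}, {2,3,7}} \<or>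
       {{Q 0 0, Q 0 1, Q 0 2}, {Q 1 0, Q 1 1, Q 1 2}, {Q 2 0, Q 2 1, Q 2 2}} = {{0,5,7}, {2,4,6}, {1,3,8}}"
    by (rule part[OF MS(1) T(1) T(2) T(3)])
  have CP: "{{Q 0 0, Q 1 0, Q 2 0}, {Q 0 1, Q 1 1, Q 2 1}, {Q 0 2, Q 1 2, Q 2 2}} = {{0,4,8}, {1,5,6}, {2,3,7}} \<or>
       {{Q 0 0, Q 1 0, Q 2 0}, {Q 0 1, Q 1 1, Q 2 1}, {Q 0 2, Q 1 2, Q 2 2}} = {{0,5,7}, {2,4,6}, {1,3,8}}"
    by (rule part[OF MS(2) T(4) T(5) T(6)])
  have n1: "{Q 0 0, Q 1 0, Q 2 0} \<noteq> {Q 0 0, Q 0 1, Q 0 2}" by (rule neq_set[of "Q 1 0"]) (use D(3) D(10) D(16) in auto)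
  have n2: "{Q 0 0, Q 1 0, Q 2 0} \<noteq> {Q 1 0, Q 1 1, Q 1 2}" by (rule neq_set[of "Q 0 0"]) (use D(3) D(4) D(5) in auto)
  have n3: "{Q 0 0, Q 1 0, Q 2 0} \<noteq> {Q 2 0, Q 2 1, Q 2 2}" by (rule neq_set[of "Q 0 0"]) (use D(6) D(7) D(8) in auto)
  have NE: "{{Q 0 0, Q 1 0, Q 2 0}, {Q 0 1, Q 1 1, Q 2 1}, {Q 0 2, Q 1 2, Q 2 2}} \<noteq> {{Q 0 0, Q 0 1, Q 0 2}, {Q 1 0, Q 1 1, Q 1 2}, {Q 2 0, Q 2 1, Q 2 2}}"
  proof
    assume eq: "{{Q 0 0, Q 1 0, Q 2 0}, {Q 0 1, Q 1 1, Q 2 1}, {Q 0 2, Q 1 2, Q 2 2}} = {{Q 0 0, Q 0 1, Q 0 2}, {Q 1 0, Q 1 1, Q 1 2}, {Q 2 0, Q 2 1, Q 2 2}}"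
    have "{Q 0 0, Q 1 0, Q 2 0} \<in> {{Q 0 0, Q 1 0, Q 2 0}, {Q 0 1, Q 1 1, Q 2 1}, {Q 0 2, Q 1 2, Q 2 2}}" by (rule insertI1)
    then have "{Q 0 0, Q 1 0, Q 2 0} \<in> {{Q 0 0, Q 0 1, Q 0 2}, {Q 1 0, Q 1 1, Q 1 2}, {Q 2 0, Q 2 1, Q 2 2}}" by (simp only: eq)
    then show False using n1 n2 n3 by (simp only: insert_iff empty_iff simp_thms)
  qed
  have rs: "row_set Q ` {0..<3} = {{Q 0 0, Q 0 1, Q 0 2}, {Q 1 0, Q 1 1, Q 1 2}, {Q 2 0, Q 2 1, Q 2 2}}"
    by (simp only: three row_set_def image_insert image_empty)
  have cs: "col_set Q ` {0..<3} = {{Q 0 0, Q 1 0, Q 2 0}, {Q 0 1, Q 1 1, Q 2 1}, {Q 0 2, Q 1 2, Q 2 2}}"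
    by (simp only: three col_set_def image_insert image_empty)
  show ?thesis unfolding rs cs using RP CP NE by (elim disjE) (simp_all only: simp_thms)
qed

end
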